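(* Let $r\in[0,1]^A$ be a reward vector, $\tau>0$, $\pi^*$ the deterministic policy putting all mass on an optimal action $a^*\in\arg\max_ar(a)$, and $\pi^*_\tau=\mathrm{softmax}(r/\tau)$, i.e. $\pi^*_\tau(a)=e^{r(a)/\tau}/\sum_{a'}e^{r(a')/\tau}$. Then $$(\pi^*-\pi^*_\tau)^\top r\le\tau\,W\Big(\frac{A-1}{e}\Big),$$ where $W:[0,\infty)\to[0,\infty)$ is the principal branch of the Lambert $W$ function, defined by $W(x)e^{W(x)}=x$. *)

theory Defs
  imports Complex_Main
begin

definition lambertW :: "real \<Rightarrow> real" where
  "lambertW x = (THE w. 0 \<le> w \<and> w * exp w = x)"

definition softmax_policy :: "('a::finite \<Rightarrow> real) \<Rightarrow> real \<Rightarrow> 'a \<Rightarrow> real" where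
  "softmax_policy r \<tau> a = exp (r a / \<tau>) / (\<Sum>a'\<in>UNIV. exp (r a' / \<tau>))"

definition det_policy :: "'a \<Rightarrow> 'a \<Rightarrow> real" where
  "det_policy b a = (if a = b then 1 else 0)"

end

theory Submission
  imports Defs
begin

lemma lambertW_props:
  assumes x: "(x::real) \<ge> 0"
  shows "lambertW x \<ge> 0 \<and> lambertW x * exp (lambertW x) = x"
proof -
  have ex: "\<exists>w. 0 \<le> w \<and> w * exp w = x"
  proof -
    have "x \<le> x * exp x" using x by (simp add: mult_le_cancel_left1)
    hence "\<exists>c. 0 \<le> c \<and> c \<le> x \<and> c * exp c = x"
      using x by (intro IVT) (auto intro!: continuous_intros)
    thus ?thesis by blast
  qed
  have uniq: "w1 = w2" if "0 \<le> w1" "w1 * exp w1 = x" "0 \<le> w2" "w2 * exp w2 = x" for w1 w2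
  proof (rule ccontr)
    have mono: "a * exp a < b * exp b" if "0 \<le> a" "a < b" for a b :: real
    proof -
      have "a * exp a \<le> a * exp b" using that by (intro mult_left_mono) auto
      also have "\<dots> < b * exp b" using that by (intro mult_strict_right_mono) auto
      finally show ?thesis .
    qed
    assume "w1 \<noteq> w2"
    then consider "w1 < w2" | "w2 < w1" by linarith
    thus False using mono[of w1 w2] mono[of w2 w1] that by cases auto
  qed
  have "0 \<le> lambertW x \<and> lambertW x * exp (lambertW x) = x"
    unfolding lambertW_def
    by (rule theI') (use ex uniq in blast)
  thus ?thesis .
qed

lemma key_ineq:
  fixes d w :: real
  shows "(d - w) * exp (- d) \<le> exp (- (w + 1))"
proof -
  have "d - w \<le> exp (d - w - 1)" using exp_ge_add_one_self[of "d - w - 1"] by simp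
  hence "(d - w) * exp (- d) \<le> exp (d - w - 1) * exp (- d)"
    by (intro mult_right_mono) auto
  also have "\<dots> = exp (- (w + 1))" by (simp add: exp_add[symmetric])
  finally show ?thesis .
qed

theorem lemma14:
  fixes r :: "'a::finite \<Rightarrow> real" and \<tau> :: real and astar :: 'a
  assumes "\<forall>a. 0 \<le> r a \<and> r a \<le> 1"
    and "\<tau> > 0"
    and "\<forall>a. r a \<le> r astar"
  shows "(\<Sum>a\<in>UNIV. (det_policy astar a - softmax_policy r \<tau> a) * r a)
           \<le> \<tau> * lambertW ((real (card (UNIV :: 'a set)) - 1) / exp 1)"
proof -
  define n where "n = real (card (UNIV :: 'a set)) - 1"
  define w where "w = lambertW (n / exp 1)"
  have cardpos: "card (UNIV :: 'a set) \<ge> 1"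
    by (metis One_nat_def Suc_leI UNIV_not_empty card_gt_0_iff finite)
  have n0: "n \<ge> 0" using cardpos by (simp add: n_def)
  have W: "w \<ge> 0" "w * exp w = n / exp 1"
    using lambertW_props[of "n / exp 1"] n0 by (auto simp: w_def)
  have nw: "n * exp (- (w + 1)) = w"
  proof -
    have "n * exp (- (w + 1)) = (n / exp 1) * exp (- w)"
      by (simp add: exp_diff exp_minus field_simps)
    also have "\<dots> = w" using W(2)[symmetric] by (simp add: exp_minus field_simps)
    finally show ?thesis .
  qed
  define Z where "Z = (\<Sum>a\<in>UNIV. exp (r a / \<tau>))"
  define E where "E = exp (r astar / \<tau>)"
  have Zpos: "Z > 0" unfolding Z_def
    by (intro sum_pos) auto
  have Epos: "E > 0" by (simp add: E_def)
  have det: "(\<Sum>a\<in>UNIV. det_policy astar a * r a) = r astar"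
    unfolding det_policy_def by (simp add: if_distrib[where f="\<lambda>x. x * _"] sum.delta cong: if_cong)
  have psum: "(\<Sum>a\<in>UNIV. softmax_policy r \<tau> a) = 1"
    using Zpos by (simp add: softmax_policy_def sum_divide_distrib[symmetric] Z_def)
  have LHS: "(\<Sum>a\<in>UNIV. (det_policy astar a - softmax_policy r \<tau> a) * r a)
      = (\<Sum>a\<in>UNIV. exp (r a / \<tau>) * (r astar - r a)) / Z"
  proof -
    have "(\<Sum>a\<in>UNIV. (det_policy astar a - softmax_policy r \<tau> a) * r a)
       = r astar * (\<Sum>a\<in>UNIV. softmax_policy r \<tau> a) - (\<Sum>a\<in>UNIV. softmax_policy r \<tau> a * r a)"
      using det psum by (simp add: left_diff_distrib sum_subtractf)
    also have "\<dots> = (\<Sum>a\<in>UNIV. softmax_policy r \<tau> a * (r astar - r a))"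
      by (simp add: sum_distrib_left right_diff_distrib sum_subtractf algebra_simps)
    also have "\<dots> = (\<Sum>a\<in>UNIV. exp (r a / \<tau>) * (r astar - r a)) / Z"
      by (simp add: softmax_policy_def Z_def sum_divide_distrib)
    finally show ?thesis .
  qed
  have termb: "exp (r a / \<tau>) * ((r astar - r a) - \<tau> * w) \<le> \<tau> * E * exp (- (w + 1))" for a
  proof -
    define d where "d = (r astar - r a) / \<tau>"
    have e: "exp (r a / \<tau>) = E * exp (- d)"
      using assms(2) by (simp add: E_def d_def exp_add[symmetric] diff_divide_distrib)
    have rr: "(r astar - r a) - \<tau> * w = \<tau> * (d - w)"
      using assms(2) by (simp add: d_def field_simps)
    have "exp (r a / \<tau>) * ((r astar - r a) - \<tau> * w) = \<tau> * E * ((d - w) * exp (- d))"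
      by (simp add: e rr)
    also have "\<dots> \<le> \<tau> * E * exp (- (w + 1))"
      using assms(2) Epos key_ineq[of d w] by (intro mult_left_mono) auto
    finally show ?thesis .
  qed
  have split: "(\<Sum>a\<in>UNIV. exp (r a / \<tau>) * ((r astar - r a) - \<tau> * w))
     = exp (r astar / \<tau>) * (0 - \<tau> * w) + (\<Sum>a\<in>UNIV - {astar}. exp (r a / \<tau>) * ((r astar - r a) - \<tau> * w))"
    by (simp add: sum.remove[of UNIV astar])
  have "(\<Sum>a\<in>UNIV - {astar}. exp (r a / \<tau>) * ((r astar - r a) - \<tau> * w))
      \<le> (\<Sum>a\<in>UNIV - {astar}. \<tau> * E * exp (- (w + 1)))"
    by (intro sum_mono termb)
  also have "\<dots> = n * (\<tau> * E * exp (- (w + 1)))"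
    using cardpos by (simp add: n_def card_Diff_singleton of_nat_diff)
  also have "\<dots> = \<tau> * E * w" using nw by (simp add: algebra_simps)
  finally have "(\<Sum>a\<in>UNIV. exp (r a / \<tau>) * ((r astar - r a) - \<tau> * w)) \<le> 0"
    using split by (simp add: E_def algebra_simps)
  hence "(\<Sum>a\<in>UNIV. exp (r a / \<tau>) * (r astar - r a)) - \<tau> * w * Z \<le> 0"
  proof -
    have "(\<Sum>a\<in>UNIV. exp (r a / \<tau>) * ((r astar - r a) - \<tau> * w))
       = (\<Sum>a\<in>UNIV. exp (r a / \<tau>) * (r astar - r a)) - (\<Sum>a\<in>UNIV. \<tau> * w * exp (r a / \<tau>))"
      by (simp add: right_diff_distrib sum_subtractf mult.commute mult.left_commute)
    also have "(\<Sum>a\<in>UNIV. \<tau> * w * exp (r a / \<tau>)) = \<tau> * w * Z"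
      by (simp add: Z_def sum_distrib_left)
    finally show ?thesis using \<open>_ \<le> 0\<close> by simp
  qed
  hence "(\<Sum>a\<in>UNIV. exp (r a / \<tau>) * (r astar - r a)) / Z \<le> \<tau> * w"
    using Zpos by (simp add: divide_le_eq)
  thus ?thesis using LHS by (simp add: w_def n_def)
qed

end
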